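(* Fix an orthonormal basis of $\mathbb{C}^n$ and let $e_{jk}$ denote the matrix units in that basis. Suppose every Lindblad operator is either a jump operator $\sqrt{\gamma_{jk}}\,e_{jk}$ with $j\neq k$, $\gamma_{jk}\ge0$, or a diagonal (de-phasing) operator $\sum_jc_je_{jj}$. Let $\pi_\iota=(e_{11},\dots,e_{nn})$ and let $\sigma.\pi_\iota$ be any permutation of it. Then the map $w:\mathbb{F}\to\mathbb{R}^{n^2-n}$, $\pi\mapsto(w^\pi_{jk})_{j\ne k}$, has vanishing differential at $\sigma.\pi_\iota$, and consequently for each fixed $\Lambda$ the map $\pi\mapsto\Omega^\pi\Lambda$ has a critical point at $\sigma.\pi_\iota$. Moreover, $A_\iota=\sum_k[L_k,L_k^\dagger]$ is diagonal in the fixed basis.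
   Context: $\mathbb{F}$: manifold of complete flags $\pi=(\pi_1,\dots,\pi_n)$ (mutually orthogonal rank-one projectors on $\mathbb{C}^n$ summing to $I$), i.e. the orbit of a fixed complete flag under conjugation by $U(n)$; its tangent directions at $\pi$ are generated by $h\in\mathfrak{su}(n)$ acting as $\pi_j\mapsto[h,\pi_j]$. $w^\pi_{jk}=\sum_m\mathrm{Tr}(\pi_jL_m\pi_kL_m^\dagger)$, $\Omega^\pi_{jk}=w^\pi_{jk}$ ($j\ne k$), $\Omega^\pi_{kk}=-\sum_{l\ne k}w^\pi_{lk}$. *)

theory Defs
  imports "HOL-Analysis.Analysis"
begin

type_synonym 'n cmat = "complex ^'n ^'n"

definition adj :: "'n::finite cmat \<Rightarrow> 'n cmat" where
  "adj A = (\<chi> i j. cnj (A $ j $ i))"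

definition mtrace :: "'n::finite cmat \<Rightarrow> complex" where
  "mtrace A = (\<Sum>i\<in>UNIV. A $ i $ i)"

definition commut :: "'n::finite cmat \<Rightarrow> 'n cmat \<Rightarrow> 'n cmat" where
  "commut A B = A ** B - B ** A"

definition mscale :: "complex \<Rightarrow> 'n::finite cmat \<Rightarrow> 'n cmat" where
  "mscale c A = (\<chi> i j. c * A $ i $ j)"

definition unitary :: "'n::finite cmat \<Rightarrow> bool" where
  "unitary U \<longleftrightarrow> adj U ** U = mat 1 \<and> U ** adj U = mat 1"

definition su :: "'n::finite cmat set" where
  "su = {h. adj h = - h \<and> mtrace h = 0}"

text \<open>Matrix units with respect to the orthonormal basis given by the columns of U:
  e_jk = U E_jk U^*, where E_jk is the standard matrix unit.\<close>
definition munit :: "'n::finite cmat \<Rightarrow> 'n \<Rightarrow> 'n \<Rightarrow> 'n cmat" where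
  "munit U j k = U ** (\<chi> a b. if a = j \<and> b = k then 1 else 0) ** adj U"

text \<open>A tuple of n matrices (a point of the ambient space containing the flag manifold)
  is a vector of matrices indexed by 'n.
  w^P_jk = sum_m Tr(P_j L_m P_k L_m^dagger), for Lindblad operators L_0,...,L_{N-1}.
  (It is real on flags; we take the real part so that w is real-valued everywhere.)\<close>
definition wfun :: "nat \<Rightarrow> (nat \<Rightarrow> 'n::finite cmat) \<Rightarrow> 'n cmat ^'n \<Rightarrow> 'n \<Rightarrow> 'n \<Rightarrow> real" where
  "wfun N L P j k = Re (\<Sum>m<N. mtrace (P $ j ** L m ** P $ k ** adj (L m)))"

definition Omega :: "nat \<Rightarrow> (nat \<Rightarrow> 'n::finite cmat) \<Rightarrow> 'n cmat ^'n \<Rightarrow> real ^'n ^'n" where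
  "Omega N L P = (\<chi> j k. if j \<noteq> k then wfun N L P j k
                         else - (\<Sum>l\<in>UNIV - {k}. wfun N L P l k))"

definition tangent :: "'n::finite cmat \<Rightarrow> 'n cmat ^'n \<Rightarrow> 'n cmat ^'n" where
  "tangent h P = (\<chi> j. commut h (P $ j))"

definition admissible_lindblad :: "'n::finite cmat \<Rightarrow> 'n cmat \<Rightarrow> bool" where
  "admissible_lindblad U A \<longleftrightarrow>
     (\<exists>j k \<gamma>. j \<noteq> k \<and> \<gamma> \<ge> 0 \<and> A = mscale (complex_of_real (sqrt \<gamma>)) (munit U j k))
   \<or> (\<exists>c :: 'n \<Rightarrow> complex. A = (\<Sum>j\<in>UNIV. mscale (c j) (munit U j j)))"

end

theory Submission imports Defs begin

lemma mm_nth: "(A ** B) $ i $ j = (\<Sum>k\<in>UNIV. A $ i $ k * B $ k $ j)"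
  by (simp add: matrix_matrix_mult_def)

lemma mm_add_r: "((A::'n::finite cmat) + B) ** C = A ** C + B ** C"
  by (simp add: vec_eq_iff mm_nth distrib_right sum.distrib)
lemma mm_diff_r: "((A::'n::finite cmat) - B) ** C = A ** C - B ** C"
  by (simp add: vec_eq_iff mm_nth left_diff_distrib sum_subtractf)
lemma mm_diff_l: "(C::'n::finite cmat) ** (A - B) = C ** A - C ** B"
  by (simp add: vec_eq_iff mm_nth right_diff_distrib sum_subtractf)
lemma mm_sum_r: "(\<Sum>x\<in>S. (A x::'n::finite cmat)) ** C = (\<Sum>x\<in>S. A x ** C)"
  by (simp add: vec_eq_iff mm_nth sum_distrib_right, subst sum.swap, simp)
lemma mm_sum_l: "(C::'n::finite cmat) ** (\<Sum>x\<in>S. A x) = (\<Sum>x\<in>S. C ** A x)"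
  by (simp add: vec_eq_iff mm_nth sum_distrib_left, subst sum.swap, simp)

lemma adj_nth[simp]: "adj A $ i $ j = cnj (A $ j $ i)" by (simp add: adj_def)
lemma adj_mm: "adj ((A::'n::finite cmat) ** B) = adj B ** adj A"
  by (simp add: vec_eq_iff mm_nth mult.commute)
lemma adj_adj[simp]: "adj (adj A) = A" by (simp add: vec_eq_iff)
lemma adj_diff: "adj (A - B) = adj A - adj B" by (simp add: vec_eq_iff)
lemma mscale_nth[simp]: "mscale c A $ i $ j = c * A $ i $ j" by (simp add: mscale_def)
lemma mm_mscale_r: "mscale c A ** B = mscale c (A ** B)"
  by (simp add: vec_eq_iff mm_nth sum_distrib_left mult.assoc)
lemma mm_mscale_l: "B ** mscale c A = mscale c (B ** A)"
  by (simp add: vec_eq_iff mm_nth sum_distrib_left mult.left_commute)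

lemma tr_mm: "mtrace ((A::'n::finite cmat) ** B) = (\<Sum>i\<in>UNIV. \<Sum>k\<in>UNIV. A $ i $ k * B $ k $ i)"
  by (simp add: mtrace_def mm_nth)
lemma tr_comm: "mtrace ((A::'n::finite cmat) ** B) = mtrace (B ** A)"
  unfolding tr_mm by (subst sum.swap) (simp add: mult.commute)

lemma linear_tr: "linear (\<lambda>X::'n::finite cmat. mtrace (X ** M))"
  by (rule linearI) (simp_all add: tr_mm distrib_right sum.distrib scaleR_sum_right)

definition gf :: "'n::finite cmat \<Rightarrow> 'n cmat \<Rightarrow> 'n cmat \<Rightarrow> complex" where
  "gf C X Y = mtrace (X ** C ** Y ** adj C)"

lemma gf_alt1: "gf C X Y = mtrace (X ** (C ** Y ** adj C))"
  by (simp add: gf_def matrix_mul_assoc)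
lemma gf_alt2: "gf C X Y = mtrace (Y ** (adj C ** X ** C))"
  unfolding gf_def by (metis matrix_mul_assoc tr_comm)

lemma bilinear_gf: "bilinear (gf C)"
  unfolding bilinear_def
proof
  show "\<forall>x. linear (gf C x)"
  proof
    fix x
    have "gf C x = (\<lambda>Y. mtrace (Y ** (adj C ** x ** C)))" by (rule ext) (simp add: gf_alt2)
    then show "linear (gf C x)" by (simp add: linear_tr)
  qed
  show "\<forall>y. linear (\<lambda>x. gf C x y)" by (simp add: gf_alt1 linear_tr)
qed

lemma bb_gf: "bounded_bilinear (gf C)"
  using bilinear_gf bilinear_conv_bounded_bilinear by blast

definition Tc :: "'n::finite cmat \<Rightarrow> 'n cmat \<Rightarrow> 'n cmat" where
  "Tc U X = adj U ** X ** U"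

definition Em :: "'n::finite \<Rightarrow> 'n \<Rightarrow> 'n cmat" where
  "Em j k = (\<chi> a b. if a = j \<and> b = k then 1 else 0)"

lemma Em_nth[simp]: "Em j k $ a $ b = (if a = j \<and> b = k then 1 else 0)"
  by (simp add: Em_def)

lemma unitaryD: "unitary U \<Longrightarrow> adj U ** U = mat 1" "unitary U \<Longrightarrow> U ** adj U = mat 1"
  by (auto simp: unitary_def)

lemma Tc_mm: assumes "unitary U" shows "Tc U (X ** Y) = Tc U X ** Tc U Y"
proof -
  have "Tc U X ** Tc U Y = adj U ** X ** (U ** adj U) ** Y ** U"
    unfolding Tc_def by (simp only: matrix_mul_assoc)
  also have "\<dots> = adj U ** X ** mat 1 ** Y ** U" by (simp only: unitaryD[OF assms])
  also have "\<dots> = Tc U (X ** Y)" unfolding Tc_def by (simp only: matrix_mul_rid matrix_mul_assoc)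
  finally show ?thesis by simp
qed

lemma Tc_inv: assumes "unitary U" shows "U ** Tc U X ** adj U = X"
proof -
  have "U ** Tc U X ** adj U = (U ** adj U) ** X ** (U ** adj U)"
    unfolding Tc_def by (simp only: matrix_mul_assoc)
  also have "\<dots> = X" by (simp only: unitaryD[OF assms] matrix_mul_lid matrix_mul_rid)
  finally show ?thesis .
qed

lemma Tc_inj: assumes "unitary U" "Tc U X = Tc U Y" shows "X = Y"
  by (metis Tc_inv[OF assms(1)] assms(2))

lemma Tc_munit: assumes "unitary U" shows "Tc U (munit U j k) = Em j k"
proof -
  have "Tc U (munit U j k) = (adj U ** U) ** Em j k ** (adj U ** U)"
    unfolding Tc_def munit_def Em_def by (simp only: matrix_mul_assoc)
  also have "\<dots> = Em j k" by (simp only: unitaryD[OF assms] matrix_mul_lid matrix_mul_rid)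
  finally show ?thesis .
qed

lemma Tc_adj: "Tc U (adj X) = adj (Tc U X)"
  by (simp add: Tc_def adj_mm matrix_mul_assoc)

lemma Tc_diff: "Tc U (X - Y) = Tc U X - Tc U Y"
  by (simp add: Tc_def mm_diff_r mm_diff_l)

lemma Tc_sum: "Tc U (\<Sum>x\<in>S. A x) = (\<Sum>x\<in>S. Tc U (A x))"
  by (simp add: Tc_def mm_sum_r mm_sum_l)

lemma Tc_mscale: "Tc U (mscale c X) = mscale c (Tc U X)"
  by (simp add: Tc_def mm_mscale_r mm_mscale_l)

lemma Tc_commut: assumes "unitary U" shows "Tc U (commut X Y) = commut (Tc U X) (Tc U Y)"
  unfolding commut_def Tc_diff Tc_mm[OF assms] by (rule refl)

definition cdiag :: "'n::finite cmat \<Rightarrow> bool" where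
  "cdiag X \<longleftrightarrow> (\<forall>i l. i \<noteq> l \<longrightarrow> X $ i $ l = 0)"

definition sparsem :: "'n::finite cmat \<Rightarrow> bool" where
  "sparsem M \<longleftrightarrow> (\<forall>i i' l. i \<noteq> i' \<longrightarrow> M $ i $ l * M $ i' $ l = 0)
                 \<and> (\<forall>x i l. i \<noteq> l \<longrightarrow> M $ x $ i * M $ x $ l = 0)"

lemma cdiag_mm_left: assumes "cdiag D" shows "(M ** D) $ i $ y = M $ i $ y * D $ y $ y"
proof -
  have "(M ** D) $ i $ y = (\<Sum>k\<in>UNIV. if k = y then M $ i $ y * D $ y $ y else 0)"
    unfolding mm_nth by (rule sum.cong) (use assms in \<open>auto simp: cdiag_def\<close>)
  then show ?thesis by simp
qed

lemma cdiag_comm: assumes "cdiag A" "cdiag B" shows "A ** B = B ** A"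
proof -
  have "(A ** B) $ i $ l = (B ** A) $ i $ l" for i l
    using assms unfolding cdiag_mm_left[OF assms(2)] cdiag_mm_left[OF assms(1)]
    by (cases "i = l") (auto simp: cdiag_def mult.commute)
  then show ?thesis by (simp add: vec_eq_iff)
qed

lemma sparse_conj1: assumes "sparsem M" "cdiag D" shows "cdiag (M ** D ** adj M)"
  unfolding cdiag_def
proof (intro allI impI)
  fix i l :: 'a assume "i \<noteq> l"
  have "(M ** D ** adj M) $ i $ l = (\<Sum>y\<in>UNIV. M $ i $ y * D $ y $ y * cnj (M $ l $ y))"
    by (simp add: mm_nth[of "M ** D"] cdiag_mm_left[OF assms(2)])
  also have "\<dots> = 0"
  proof (rule sum.neutral, rule ballI)
    fix y
    have "M $ i $ y * M $ l $ y = 0" using assms(1) \<open>i \<noteq> l\<close> by (auto simp: sparsem_def)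
    then show "M $ i $ y * D $ y $ y * cnj (M $ l $ y) = 0" by auto
  qed
  finally show "(M ** D ** adj M) $ i $ l = 0" .
qed

lemma sparse_conj2: assumes "sparsem M" "cdiag D" shows "cdiag (adj M ** D ** M)"
  unfolding cdiag_def
proof (intro allI impI)
  fix i l :: 'a assume "i \<noteq> l"
  have "(adj M ** D ** M) $ i $ l = (\<Sum>y\<in>UNIV. cnj (M $ y $ i) * D $ y $ y * M $ y $ l)"
    by (simp add: mm_nth[of "adj M ** D"] cdiag_mm_left[OF assms(2)])
  also have "\<dots> = 0"
  proof (rule sum.neutral, rule ballI)
    fix y
    have "M $ y $ i * M $ y $ l = 0" using assms(1) \<open>i \<noteq> l\<close> by (auto simp: sparsem_def)
    then show "cnj (M $ y $ i) * D $ y $ y * M $ y $ l = 0" by auto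
  qed
  finally show "(adj M ** D ** M) $ i $ l = 0" .
qed

lemma cdiag_Em: "cdiag (Em a a)" by (simp add: cdiag_def)
lemma cdiag_mat1: "cdiag (mat 1)" by (simp add: cdiag_def mat_def)

lemma sparse_adm: assumes "unitary U" "admissible_lindblad U L" shows "sparsem (Tc U L)"
  using assms(2) unfolding admissible_lindblad_def
proof (elim disjE exE conjE)
  fix j k \<gamma> assume "L = mscale (complex_of_real (sqrt \<gamma>)) (munit U j k)"
  then have "Tc U L = mscale (complex_of_real (sqrt \<gamma>)) (Em j k)"
    by (simp add: Tc_mscale Tc_munit[OF assms(1)])
  then show "sparsem (Tc U L)" by (auto simp: sparsem_def)
next
  fix c assume "L = (\<Sum>j\<in>UNIV. mscale (c j) (munit U j j))"
  then have "Tc U L = (\<Sum>j\<in>UNIV. mscale (c j) (Em j j))"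
    by (simp add: Tc_sum Tc_mscale Tc_munit[OF assms(1)])
  then have "Tc U L $ a $ b = (\<Sum>j\<in>UNIV. c j * (if a = j \<and> b = j then 1 else 0))" for a b
    by simp
  also have "(\<Sum>j\<in>UNIV. c j * (if a = j \<and> b = j then 1 else 0)) = (\<Sum>j\<in>UNIV. if a = j \<and> b = j then c j else 0)" for a b
    by (rule sum.cong) auto
  also have "(\<Sum>j\<in>UNIV. if a = j \<and> b = j then c j else 0) = (if a = b then c a else 0)" for a b
  proof (cases "a = b")
    case True then show ?thesis by simp
  next
    case False then show ?thesis by (simp add: sum.neutral)
  qed
  finally have tl: "Tc U L $ a $ b = (if a = b then c a else 0)" for a b .
  have r1: "Tc U L $ i $ l * Tc U L $ i' $ l = 0" if "i \<noteq> i'" for i i' l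
    using that by (cases "i = l") (simp_all add: tl)
  have r2: "Tc U L $ x $ i * Tc U L $ x $ l = 0" if "i \<noteq> l" for x i l
    using that by (cases "x = i") (simp_all add: tl)
  show "sparsem (Tc U L)" by (simp add: sparsem_def r1 r2)
qed

lemma mtrace_diff: "mtrace (A - B) = mtrace A - mtrace B"
  by (simp add: mtrace_def sum_subtractf)

lemma tr_commut_zero: assumes "(X::'n::finite cmat) ** Y = Y ** X"
  shows "mtrace (commut h X ** Y) = 0"
proof -
  have "mtrace (X ** h ** Y) = mtrace (X ** (h ** Y))" by (simp add: matrix_mul_assoc)
  also have "\<dots> = mtrace (h ** Y ** X)" by (rule tr_comm)
  also have "\<dots> = mtrace (h ** (Y ** X))" by (simp add: matrix_mul_assoc)
  also have "\<dots> = mtrace (h ** X ** Y)" by (metis assms matrix_mul_assoc)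
  finally have "mtrace (X ** h ** Y) = mtrace (h ** X ** Y)" .
  then show ?thesis by (simp add: commut_def mm_diff_r mtrace_diff)
qed

lemma comm_adm1: assumes "unitary U" "admissible_lindblad U L"
  shows "munit U a a ** (L ** munit U b b ** adj L) = (L ** munit U b b ** adj L) ** munit U a a"
proof (rule Tc_inj[OF assms(1)])
  have d: "cdiag (Tc U L ** Em b b ** adj (Tc U L))"
    by (rule sparse_conj1[OF sparse_adm[OF assms] cdiag_Em])
  show "Tc U (munit U a a ** (L ** munit U b b ** adj L)) = Tc U ((L ** munit U b b ** adj L) ** munit U a a)"
    unfolding Tc_mm[OF assms(1)] Tc_adj Tc_munit[OF assms(1)]
    by (rule cdiag_comm[OF cdiag_Em d])
qed

lemma comm_adm2: assumes "unitary U" "admissible_lindblad U L"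
  shows "munit U b b ** (adj L ** munit U a a ** L) = (adj L ** munit U a a ** L) ** munit U b b"
proof (rule Tc_inj[OF assms(1)])
  have d: "cdiag (adj (Tc U L) ** Em a a ** Tc U L)"
    by (rule sparse_conj2[OF sparse_adm[OF assms] cdiag_Em])
  show "Tc U (munit U b b ** (adj L ** munit U a a ** L)) = Tc U ((adj L ** munit U a a ** L) ** munit U b b)"
    unfolding Tc_mm[OF assms(1)] Tc_adj Tc_munit[OF assms(1)]
    by (rule cdiag_comm[OF cdiag_Em d])
qed

lemma gf_zero1: assumes "unitary U" "admissible_lindblad U L"
  shows "gf L (munit U a a) (commut h (munit U b b)) = 0"
  unfolding gf_alt2 by (rule tr_commut_zero[OF comm_adm2[OF assms]])

lemma gf_zero2: assumes "unitary U" "admissible_lindblad U L"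
  shows "gf L (commut h (munit U a a)) (munit U b b) = 0"
  unfolding gf_alt1 by (rule tr_commut_zero[OF comm_adm1[OF assms]])

definition Dw :: "nat \<Rightarrow> (nat \<Rightarrow> 'n::finite cmat) \<Rightarrow> 'n cmat ^'n \<Rightarrow> 'n \<Rightarrow> 'n \<Rightarrow> 'n cmat ^'n \<Rightarrow> real" where
  "Dw N L P0 j k Q = Re (\<Sum>m<N. gf (L m) (P0$j) (Q$k) + gf (L m) (Q$j) (P0$k))"

lemma wfun_gf: "wfun N L P j k = Re (\<Sum>m<N. gf (L m) (P$j) (P$k))"
  by (simp add: wfun_def gf_def)

lemma has_derivative_nth: "((\<lambda>P::'n::finite cmat^'n. P $ j) has_derivative (\<lambda>Q. Q $ j)) F"
  by (rule bounded_linear.has_derivative[OF bounded_linear_vec_nth has_derivative_ident])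

lemma wfun_deriv: "((\<lambda>P. wfun N L P j k) has_derivative Dw N L P0 j k) (at P0)"
  unfolding wfun_gf Dw_def[abs_def]
  by (intro bounded_linear.has_derivative[OF bounded_linear_Re] has_derivative_sum
      bounded_bilinear.FDERIV[OF bb_gf] has_derivative_nth)

lemma Dw_zero: assumes "unitary U" "\<forall>m<N. admissible_lindblad U (L m)"
  and P0: "P0 = (\<chi> j. munit U (\<sigma> j) (\<sigma> j))"
  shows "Dw N L P0 j k (tangent h P0) = 0"
proof -
  have "gf (L m) (P0$j) (tangent h P0 $ k) + gf (L m) (tangent h P0 $ j) (P0$k) = 0" if "m < N" for m
    using that assms unfolding P0 tangent_def by (simp add: gf_zero1 gf_zero2)
  then show ?thesis unfolding Dw_def by simp
qed

definition DO :: "nat \<Rightarrow> (nat \<Rightarrow> 'n::finite cmat) \<Rightarrow> 'n cmat ^'n \<Rightarrow> 'n \<Rightarrow> 'n \<Rightarrow> 'n cmat ^'n \<Rightarrow> real" where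
  "DO N L P0 i k Q = (if i \<noteq> k then Dw N L P0 i k Q else - (\<Sum>l\<in>UNIV - {k}. Dw N L P0 l k Q))"

lemma Omega_nth_deriv: "((\<lambda>P. Omega N L P $ i $ k) has_derivative DO N L P0 i k) (at P0)"
proof (cases "i = k")
  case True
  then show ?thesis unfolding Omega_def DO_def[abs_def]
    by (simp add: wfun_deriv)
next
  case False
  then show ?thesis unfolding Omega_def DO_def[abs_def]
    by (simp add: wfun_deriv)
qed

lemma vec_has_derivative:
  fixes f :: "'a::real_normed_vector \<Rightarrow> real^'n::finite"
  assumes "\<And>i. ((\<lambda>x. f x $ i) has_derivative (\<lambda>v. f' v $ i)) (at x)"
  shows "(f has_derivative f') (at x)"
proof -
  have "\<forall>b\<in>Basis. ((\<lambda>y. f y \<bullet> b) has_derivative (\<lambda>v. f' v \<bullet> b)) (at x within UNIV)"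
  proof
    fix b :: "real^'n" assume "b \<in> Basis"
    then obtain k where b: "b = axis k 1" by (auto simp: Basis_vec_def)
    show "((\<lambda>y. f y \<bullet> b) has_derivative (\<lambda>v. f' v \<bullet> b)) (at x within UNIV)"
      unfolding b inner_axis using assms[of k] by simp
  qed
  then show ?thesis using has_derivative_componentwise_within[of f f' x UNIV] by simp
qed

lemma Omega_vec_deriv:
  "((\<lambda>P. Omega N L P *v \<Lambda>) has_derivative (\<lambda>Q. \<chi> i. \<Sum>k\<in>UNIV. DO N L P0 i k Q * \<Lambda> $ k)) (at P0)"
proof (rule vec_has_derivative)
  fix i
  show "((\<lambda>P. (Omega N L P *v \<Lambda>) $ i) has_derivative (\<lambda>Q. (\<chi> i. \<Sum>k\<in>UNIV. DO N L P0 i k Q * \<Lambda> $ k) $ i)) (at P0)"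
    unfolding matrix_vector_mult_def vec_lambda_beta
    by (intro has_derivative_sum has_derivative_mult_left Omega_nth_deriv)
qed

lemma third_part: assumes "unitary U" "\<forall>m<N. admissible_lindblad U (L m)" "j \<noteq> k"
  shows "(adj U ** (\<Sum>m<N. commut (L m) (adj (L m))) ** U) $ j $ k = 0"
proof -
  have "adj U ** (\<Sum>m<N. commut (L m) (adj (L m))) ** U = (\<Sum>m<N. commut (Tc U (L m)) (adj (Tc U (L m))))"
  proof -
    have "Tc U (\<Sum>m<N. commut (L m) (adj (L m))) = (\<Sum>m<N. commut (Tc U (L m)) (adj (Tc U (L m))))"
      by (simp add: Tc_sum Tc_commut[OF assms(1)] Tc_adj)
    then show ?thesis by (simp add: Tc_def)
  qed
  moreover have "commut (Tc U (L m)) (adj (Tc U (L m))) $ j $ k = 0" if "m < N" for m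
  proof -
    have sp: "sparsem (Tc U (L m))" using sparse_adm[OF assms(1)] assms(2) that by blast
    have "cdiag (Tc U (L m) ** mat 1 ** adj (Tc U (L m)))" by (rule sparse_conj1[OF sp cdiag_mat1])
    moreover have "cdiag (adj (Tc U (L m)) ** mat 1 ** Tc U (L m))" by (rule sparse_conj2[OF sp cdiag_mat1])
    ultimately show ?thesis using assms(3) by (simp add: commut_def cdiag_def)
  qed
  ultimately show ?thesis by simp
qed

theorem mainTheorem12:
  fixes U :: "'n::finite cmat" and L :: "nat \<Rightarrow> 'n cmat" and N :: nat
    and \<sigma> :: "'n \<Rightarrow> 'n"
  assumes "unitary U"
    and "\<forall>m<N. admissible_lindblad U (L m)"
    and "bij \<sigma>"
  defines "P0 \<equiv> (\<chi> j. munit U (\<sigma> j) (\<sigma> j))"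
  shows "(\<forall>j k. j \<noteq> k \<longrightarrow>
            (\<exists>D. ((\<lambda>P. wfun N L P j k) has_derivative D) (at P0)
                 \<and> (\<forall>h\<in>su. D (tangent h P0) = 0)))
       \<and> (\<forall>\<Lambda> :: real ^'n.
            \<exists>D. ((\<lambda>P. Omega N L P *v \<Lambda>) has_derivative D) (at P0)
                 \<and> (\<forall>h\<in>su. D (tangent h P0) = 0))
       \<and> (let A = (\<Sum>m<N. commut (L m) (adj (L m))) in
            \<forall>j k. j \<noteq> k \<longrightarrow> (adj U ** A ** U) $ j $ k = 0)"
proof (intro conjI allI impI)
  fix j k :: 'n assume "j \<noteq> k"
  show "\<exists>D. ((\<lambda>P. wfun N L P j k) has_derivative D) (at P0) \<and> (\<forall>h\<in>su. D (tangent h P0) = 0)"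
    using wfun_deriv Dw_zero[OF assms(1,2) P0_def[THEN meta_eq_to_obj_eq]] by blast
next
  fix \<Lambda> :: "real^'n"
  have "(\<lambda>Q. \<chi> i. \<Sum>k\<in>UNIV. DO N L P0 i k Q * \<Lambda> $ k) (tangent h P0) = 0" for h
  proof -
    have dz: "Dw N L P0 a b (tangent h P0) = 0" for a b
      by (rule Dw_zero[OF assms(1,2)]) (simp add: P0_def)
    have dO: "DO N L P0 a b (tangent h P0) = 0" for a b
      by (cases "a = b") (simp_all add: DO_def dz)
    show ?thesis unfolding vec_eq_iff dO by simp
  qed
  then show "\<exists>D. ((\<lambda>P. Omega N L P *v \<Lambda>) has_derivative D) (at P0) \<and> (\<forall>h\<in>su. D (tangent h P0) = 0)"
    using Omega_vec_deriv by blast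
next
  show "let A = (\<Sum>m<N. commut (L m) (adj (L m))) in
            \<forall>j k. j \<noteq> k \<longrightarrow> (adj U ** A ** U) $ j $ k = 0"
    using third_part[OF assms(1,2)] by simp
qed

end
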